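(* Let \[ \mathscr{E}_n=-\int_0^\infty\frac{2y}{\sinh^3 y}\Bigl(\int_0^y\frac{t\sinh t}{t^2+\pi^2n^2}\,dt\Bigr)dy\quad(n\in\mathbb{Z}\setminus\{0\}),\qquad \mathscr{E}_0=\int_0^\infty\frac{2y}{\sinh^3 y}\Bigl(\sinh y-\int_0^y\frac{\sinh t}{t}\,dt\Bigr)dy. \] Then the discrete Hilbert transform of $(\mathscr{E}_n)_{n\in\mathbb{Z}}$, i.e. the sequence $\frac{1}{\pi}\sum_{m\in\mathbb{Z}\setminus\{0\}}\frac{\mathscr{E}_{n-m}}{m}$, equals $(\mathscr{F}_n)_{n\in\mathbb{Z}}$, where \[ \mathscr{F}_n=\frac{1}{\pi n}\int_0^\infty\frac{2y^3}{(y^2+\pi^2n^2)\sinh^2 y}\,dy\quad(n\neq0),\qquad\mathscr{F}_0=0. \] Furthermore, $\mathscr{E}_0>0$, $\mathscr{E}_n<0$ for all $n\neq0$, and the sequence $(\mathscr{E}_n)$ is absolutely summable with $\sum_{n\in\mathbb{Z}}\mathscr{E}_n=0$. *)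

theory Defs
  imports "HOL-Analysis.Analysis"
begin

text \<open>Integrals are Henstock--Kurzweil integrals; \<open>\<int>_0^\<infinity>\<close> is the integral over \<open>{0..}\<close>.\<close>

definition calE :: "int \<Rightarrow> real" where
  "calE n = (if n = 0 then
      integral {0..} (\<lambda>y. 2 * y / (sinh y) ^ 3 *
         (sinh y - integral {0..y} (\<lambda>t. sinh t / t)))
    else
      - integral {0..} (\<lambda>y. 2 * y / (sinh y) ^ 3 *
         integral {0..y} (\<lambda>t. t * sinh t / (t\<^sup>2 + pi\<^sup>2 * (real_of_int n)\<^sup>2))))"

definition calF :: "int \<Rightarrow> real" where
  "calF n = (if n = 0 then 0 else
      1 / (pi * real_of_int n) *
      integral {0..} (\<lambda>y. 2 * y ^ 3 / ((y\<^sup>2 + pi\<^sup>2 * (real_of_int n)\<^sup>2) * (sinh y)\<^sup>2)))"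

end

theory Submission
  imports Defs "HOL-Real_Asymp.Real_Asymp"
begin

lemma Digamma_reflection:
  fixes z :: complex
  assumes z: "z \<notin> \<int>"
  shows "Digamma z - Digamma (1 - z) = - of_real pi * cot (of_real pi * z)"
proof -
  have z1: "1 - z \<notin> \<int>" using z Ints_diff[of 1 "1 - z"] by auto
  have zn: "z \<notin> \<int>\<^sub>\<le>\<^sub>0" "1 - z \<notin> \<int>\<^sub>\<le>\<^sub>0" using z z1 nonpos_Ints_subset_Ints by auto
  have sinz: "sin (of_real pi * z) \<noteq> 0" using z by (subst sin_eq_0) auto
  have op: "open (- \<int> :: complex set)" by auto
  have ev: "eventually (\<lambda>x. x \<in> - (\<int>::complex set)) (nhds z)"
    using z by (intro eventually_nhds_in_open op) auto
  have ev2: "eventually (\<lambda>x. Gamma x * Gamma (1 - x) = of_real pi / sin (of_real pi * x)) (nhds z)"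
    using ev by eventually_elim (rule Gamma_reflection_complex)
  have d1: "((\<lambda>x. Gamma x * Gamma (1 - x)) has_field_derivative
      (Gamma z * Digamma z * Gamma (1 - z) + Gamma z * (Gamma (1 - z) * Digamma (1 - z) * (-1)))) (at z)"
    using zn by (auto intro!: derivative_eq_intros)
  have d2: "((\<lambda>x. of_real pi / sin (of_real pi * x)) has_field_derivative
      (- (of_real pi * (cos (of_real pi * z) * of_real pi)) / (sin (of_real pi * z))\<^sup>2)) (at z)"
    using sinz by (auto intro!: derivative_eq_intros simp: power2_eq_square)
  have d1': "((\<lambda>x. of_real pi / sin (of_real pi * x)) has_field_derivative
      (Gamma z * Digamma z * Gamma (1 - z) + Gamma z * (Gamma (1 - z) * Digamma (1 - z) * (-1)))) (at z)"
    using d1 ev2 by (subst (asm) DERIV_cong_ev[OF refl ev2 refl]) 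
  have eq: "Gamma z * Digamma z * Gamma (1 - z) + Gamma z * (Gamma (1 - z) * Digamma (1 - z) * (-1))
      = - (of_real pi * (cos (of_real pi * z) * of_real pi)) / (sin (of_real pi * z))\<^sup>2"
    using DERIV_unique[OF d1' d2] .
  have G: "Gamma z * Gamma (1 - z) = of_real pi / sin (of_real pi * z)"
    by (rule Gamma_reflection_complex)
  have "(Gamma z * Gamma (1 - z)) * (Digamma z - Digamma (1 - z))
      = (of_real pi / sin (of_real pi * z)) * (- of_real pi * cot (of_real pi * z))"
    using eq sinz by (simp add: cot_def field_simps power2_eq_square)
  moreover have "Gamma z * Gamma (1 - z) \<noteq> 0" using G sinz by simp
  ultimately show ?thesis unfolding G by (metis mult_left_cancel)
qed

lemma cos_ii_real: "cos (\<i> * complex_of_real x) = complex_of_real (cosh x)"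
  by (simp add: cosh_complex[symmetric] cosh_def exp_of_real exp_minus)

lemma sin_ii_real: "sin (\<i> * complex_of_real x) = \<i> * complex_of_real (sinh x)"
  using sin_i_times[of "complex_of_real x"] by (simp add: sinh_def exp_of_real exp_minus)

lemma cot_nat_sums:
  fixes t :: real
  assumes t: "t > 0"
  shows "(\<lambda>k::nat. 1 / (t\<^sup>2 + pi\<^sup>2 * (real (Suc k))\<^sup>2) + 1 / (t\<^sup>2 + pi\<^sup>2 * (real k)\<^sup>2))
           sums (cosh t / (t * sinh t))"
proof -
  define s where "s = t / pi"
  have s: "s > 0" using t by (simp add: s_def)
  define z where "z = \<i> * complex_of_real s"
  have zI: "z \<notin> \<int>" using s by (simp add: z_def complex_is_Int_iff)
  have z0: "z \<noteq> 0" using zI by auto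
  have z1: "1 - z \<noteq> 0" using zI by (metis Ints_1 right_minus_eq)
  have S1: "(\<lambda>k. inverse (of_nat (Suc k)) - inverse (z + of_nat k)) sums (Digamma z + euler_mascheroni)"
    using summable_Digamma[OF z0] by (simp add: Digamma_def summable_sums)
  have S2: "(\<lambda>k. inverse (of_nat (Suc k)) - inverse ((1 - z) + of_nat k)) sums (Digamma (1 - z) + euler_mascheroni)"
    using summable_Digamma[OF z1] by (simp add: Digamma_def summable_sums)
  have S3: "(\<lambda>k. inverse ((1 - z) + of_nat k) - inverse (z + of_nat k)) sums (Digamma z - Digamma (1 - z))"
    using sums_diff[OF S1 S2] by simp
  have S4: "(\<lambda>k. Im (inverse ((1 - z) + of_nat k) - inverse (z + of_nat k))) sums
       Im (- of_real pi * cot (of_real pi * z))"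
    using sums_Im[OF S3] Digamma_reflection[OF zI] by simp
  have rhs: "Im (- of_real pi * cot (of_real pi * z)) = pi * cosh t / sinh t"
  proof -
    have "of_real pi * z = \<i> * complex_of_real t" using s_def by (simp add: z_def)
    moreover have "sinh t \<noteq> 0" using t by simp
    ultimately show ?thesis by (simp add: cot_def cos_ii_real sin_ii_real Im_divide power2_eq_square)
  qed
  have lhs: "Im (inverse ((1 - z) + of_nat k) - inverse (z + of_nat k)) =
      pi * t * (1 / (t\<^sup>2 + pi\<^sup>2 * (real (Suc k))\<^sup>2) + 1 / (t\<^sup>2 + pi\<^sup>2 * (real k)\<^sup>2))" for k
  proof -
    have A: "Im (inverse ((1 - z) + of_nat k)) = pi * t / (t\<^sup>2 + pi\<^sup>2 * (real (Suc k))\<^sup>2)"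
    proof -
      have "Im (inverse ((1 - z) + of_nat k)) = s / ((real k + 1)\<^sup>2 + s\<^sup>2)"
        by (simp add: z_def inverse_eq_divide Im_divide)
      also have "\<dots> = pi * t / (t\<^sup>2 + pi\<^sup>2 * (real (Suc k))\<^sup>2)"
        using t by (simp add: s_def field_simps power2_eq_square)
      finally show ?thesis .
    qed
    have B: "Im (inverse (z + of_nat k)) = - (pi * t / (t\<^sup>2 + pi\<^sup>2 * (real k)\<^sup>2))"
    proof -
      have "Im (inverse (z + of_nat k)) = - (s / ((real k)\<^sup>2 + s\<^sup>2))"
        by (simp add: z_def inverse_eq_divide Im_divide)
      also have "s / ((real k)\<^sup>2 + s\<^sup>2) = pi * t / (t\<^sup>2 + pi\<^sup>2 * (real k)\<^sup>2)"
        using t by (simp add: s_def field_simps power2_eq_square)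
      finally show ?thesis .
    qed
    show ?thesis by (simp only: minus_complex.sel A B) (simp add: field_simps)
  qed
  have "(\<lambda>k. pi * t * (1 / (t\<^sup>2 + pi\<^sup>2 * (real (Suc k))\<^sup>2) + 1 / (t\<^sup>2 + pi\<^sup>2 * (real k)\<^sup>2)))
      sums (pi * cosh t / sinh t)"
    using S4 unfolding lhs rhs .
  from sums_mult[OF this, of "1 / (pi * t)"]
  have "(\<lambda>k. 1 / (pi * t) * (pi * t * (1 / (t\<^sup>2 + pi\<^sup>2 * (real (Suc k))\<^sup>2) + 1 / (t\<^sup>2 + pi\<^sup>2 * (real k)\<^sup>2))))
      sums (1 / (pi * t) * (pi * cosh t / sinh t))" .
  moreover have "1 / (pi * t) * (pi * cosh t / sinh t) = cosh t / (t * sinh t)" using t by simp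
  moreover have "\<And>k. 1 / (pi * t) * (pi * t * X k) = X k" for X :: "nat \<Rightarrow> real" using t by simp
  ultimately show ?thesis using t by simp
qed

definition Q :: "real \<Rightarrow> int \<Rightarrow> real" where
  "Q t k = t\<^sup>2 + pi\<^sup>2 * (real_of_int k)\<^sup>2"

lemma Q_nonneg: "Q t k \<ge> 0"
  by (simp add: Q_def)

lemma Q_pos: "t \<noteq> 0 \<Longrightarrow> Q t k > 0"
  by (simp add: Q_def add_pos_nonneg)

lemma Q_pos': "k \<noteq> 0 \<Longrightarrow> Q t k > 0"
  by (simp add: Q_def add_nonneg_pos)

lemma Q_minus [simp]: "Q t (- k) = Q t k"
  by (simp add: Q_def)

lemma cot_has_sum:
  fixes t :: real
  assumes t: "t > 0"
  shows "((\<lambda>k. 1 / Q t k) has_sum (cosh t / (t * sinh t))) UNIV"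
proof -
  define a where "a k = 1 / (t\<^sup>2 + pi\<^sup>2 * (real k)\<^sup>2)" for k :: nat
  define b where "b k = 1 / (t\<^sup>2 + pi\<^sup>2 * (real (Suc k))\<^sup>2)" for k :: nat
  have S: "(\<lambda>k. b k + a k) sums (cosh t / (t * sinh t))"
    using cot_nat_sums[OF t] by (simp add: a_def b_def)
  have a0: "a k \<ge> 0" "b k \<ge> 0" for k by (simp_all add: a_def b_def add_nonneg_nonneg)
  have sa: "summable a"
    by (rule summable_comparison_test[of _ "\<lambda>k. b k + a k"]) (use a0 S in \<open>auto intro: sums_summable\<close>)
  have sb: "summable b"
    by (rule summable_comparison_test[of _ "\<lambda>k. b k + a k"]) (use a0 S in \<open>auto intro: sums_summable\<close>)
  have sum: "suminf b + suminf a = cosh t / (t * sinh t)"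
    using S sa sb by (metis suminf_add sums_unique)
  have ha: "(a has_sum suminf a) UNIV"
    using a0 sa by (intro sums_nonneg_imp_has_sum) (auto simp: summable_sums)
  have hb: "(b has_sum suminf b) UNIV"
    using a0 sb by (intro sums_nonneg_imp_has_sum) (auto simp: summable_sums)
  have h1: "((\<lambda>k. 1 / Q t k) has_sum suminf a) (range int)"
  proof -
    have "(((\<lambda>k. 1 / Q t k) \<circ> int) has_sum suminf a) UNIV"
    proof -
      have "(\<lambda>k. 1 / Q t k) \<circ> int = a" by (auto simp: a_def Q_def)
      then show ?thesis using ha by simp
    qed
    then show ?thesis by (subst has_sum_reindex) auto
  qed
  have h2: "((\<lambda>k. 1 / Q t k) has_sum suminf b) (range (\<lambda>n. - int n - 1))"
  proof -
    have "(((\<lambda>k. 1 / Q t k) \<circ> (\<lambda>n. - int n - 1)) has_sum suminf b) UNIV"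
    proof -
      have "(\<lambda>k. 1 / Q t k) \<circ> (\<lambda>n. - int n - 1) = b"
        by (auto simp: b_def Q_def power2_eq_square algebra_simps)
      then show ?thesis using hb by simp
    qed
    moreover have "inj (\<lambda>n::nat. - int n - 1)" by (auto simp: inj_def)
    ultimately show ?thesis by (subst has_sum_reindex) auto
  qed
  have U: "range int \<union> range (\<lambda>n. - int n - 1) = (UNIV :: int set)"
  proof -
    have "k \<in> range int \<or> k \<in> range (\<lambda>n. - int n - 1)" for k :: int
    proof (cases "k \<ge> 0")
      case True then show ?thesis by (metis nonneg_int_cases rangeI)
    next
      case False
      then have "k = - int (nat (- k - 1)) - 1" by simp
      then show ?thesis by (metis rangeI)
    qed
    then show ?thesis by auto
  qed
  have "((\<lambda>k. 1 / Q t k) has_sum (suminf a + suminf b)) (range int \<union> range (\<lambda>n. - int n - 1))"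
    by (rule has_sum_Un_disjoint[OF h1 h2]) auto
  then show ?thesis using U sum by (simp add: add.commute)
qed

lemma summable_cmp:
  fixes f g :: "'a \<Rightarrow> real"
  assumes "g summable_on A" "\<And>x. x \<in> A \<Longrightarrow> \<bar>f x\<bar> \<le> g x"
  shows "f summable_on A"
proof -
  have "(\<lambda>x. \<bar>f x\<bar>) summable_on A"
    by (rule summable_on_comparison_test[OF assms(1)]) (use assms(2) in auto)
  then show ?thesis using summable_on_iff_abs_summable_on_real[of f A] by simp
qed

lemma has_sum_odd_zero:
  fixes f :: "int \<Rightarrow> real"
  assumes h: "(f has_sum S) A" and A: "\<And>x. x \<in> A \<Longrightarrow> -x \<in> A" and odd: "\<And>x. f (-x) = - f x"
  shows "S = 0"
proof -
  have img: "uminus ` A = A"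
    using A by (auto intro!: image_eqI[where x="- _"])
  have "(f has_sum S) (uminus ` A)" using h img by simp
  then have "((f \<circ> uminus) has_sum S) A" using has_sum_reindex[of uminus A f S] by simp
  then have "((\<lambda>x. - f x) has_sum S) A" by (simp add: o_def odd)
  then have "(f has_sum - S) A" using has_sum_uminus by (metis add.inverse_inverse)
  then have "S = - S" using h has_sum_unique by blast
  then show ?thesis by simp
qed

lemma has_sum_sym_partial:
  fixes f :: "int \<Rightarrow> real"
  assumes "(f has_sum S) UNIV"
  shows "(\<lambda>N::nat. sum f {- int N..int N}) \<longlonglongrightarrow> S"
proof -
  have lim: "(sum f \<longlongrightarrow> S) (finite_subsets_at_top UNIV)" using assms by (simp add: has_sum_def)
  have fl: "filterlim (\<lambda>N::nat. {- int N..int N}) (finite_subsets_at_top UNIV) sequentially"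
  proof (subst filterlim_finite_subsets_at_top, intro allI impI)
    fix X :: "int set" assume X: "finite X \<and> X \<subseteq> UNIV"
    have "bdd_above (abs ` X)" using X by (intro bdd_above_finite finite_imageI) auto
    then obtain M where M: "\<And>x. x \<in> X \<Longrightarrow> \<bar>x\<bar> \<le> M"
      by (auto simp: bdd_above_def)
    show "\<forall>\<^sub>F N in sequentially. finite {- int N..int N} \<and> X \<subseteq> {- int N..int N} \<and> {- int N..int N} \<subseteq> UNIV"
      using eventually_ge_at_top[of "nat M"]
      by eventually_elim (auto dest!: M)
  qed
  show ?thesis using tendsto_compose_filtermap[of "sum f"] filterlim_compose[OF lim fl] by (simp add: o_def)
qed

lemma telescope_sym:
  fixes p :: "int \<Rightarrow> real"
  shows "sum (\<lambda>k. p k - p (k - 1)) {- int N..int N} = p (int N) - p (- int N - 1)"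
proof (induction N)
  case 0 then show ?case by simp
next
  case (Suc N)
  have "{- int (Suc N)..int (Suc N)} = insert (int N + 1) (insert (- int N - 1) {- int N..int N})"
    by auto
  then have "sum (\<lambda>k. p k - p (k - 1)) {- int (Suc N)..int (Suc N)} =
     (p (1 + int N) - p (int N)) + ((p (- int N - 1) - p (- int N - 2)) + sum (\<lambda>k. p k - p (k - 1)) {- int N..int N})"
    by (simp add: algebra_simps)
  also have "\<dots> = p (int (Suc N)) - p (- int (Suc N) - 1)"
    using Suc arg_cong[where f=p, of "- int N - 2" "- int (Suc N) - 1"] by simp
  finally show ?case .
qed

lemma telescope_has_sum:
  fixes p :: "int \<Rightarrow> real"
  assumes s: "(\<lambda>k. p k - p (k - 1)) summable_on UNIV"
    and l1: "(\<lambda>N::nat. p (int N)) \<longlonglongrightarrow> 0" and l2: "(\<lambda>N::nat. p (- int N)) \<longlonglongrightarrow> 0"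
  shows "((\<lambda>k. p k - p (k - 1)) has_sum 0) UNIV"
proof -
  obtain S where S: "((\<lambda>k. p k - p (k - 1)) has_sum S) UNIV" using s by (auto simp: summable_on_def)
  have "(\<lambda>N::nat. p (int N) - p (- int N - 1)) \<longlonglongrightarrow> S"
    using has_sum_sym_partial[OF S] by (simp add: telescope_sym)
  moreover have "(\<lambda>N::nat. p (int N) - p (- int N - 1)) \<longlonglongrightarrow> 0 - 0"
  proof (intro tendsto_diff l1)
    have "(\<lambda>N::nat. p (- int (Suc N))) \<longlonglongrightarrow> 0" using l2 by (rule LIMSEQ_Suc)
    moreover have "(\<lambda>N::nat. p (- int (Suc N))) = (\<lambda>N::nat. p (- int N - 1))"
      by (intro ext arg_cong[where f=p]) simp
    ultimately show "(\<lambda>N::nat. p (- int N - 1)) \<longlonglongrightarrow> 0" by simp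
  qed
  ultimately have "S = 0" using LIMSEQ_unique by fastforce
  then show ?thesis using S by simp
qed

lemma shift_has_sum:
  fixes p :: "int \<Rightarrow> real"
  assumes "((\<lambda>k. p k - p (k - 1)) has_sum 0) UNIV"
  shows "((\<lambda>k. p k - p (k - int n)) has_sum 0) UNIV"
proof (induction n)
  case 0 then show ?case by simp
next
  case (Suc n)
  have sh: "((\<lambda>k. p (k - int n) - p (k - int n - 1)) has_sum 0) UNIV"
  proof -
    have "((\<lambda>k. p k - p (k - 1)) has_sum 0) UNIV = ((\<lambda>k. p (k - int n) - p (k - int n - 1)) has_sum 0) UNIV"
      by (rule has_sum_reindex_bij_witness[where j="\<lambda>k. k + int n" and i="\<lambda>k. k - int n"]) auto
    then show ?thesis using assms by simp
  qed
  have "((\<lambda>k. (p k - p (k - int n)) + (p (k - int n) - p (k - int n - 1))) has_sum 0 + 0) UNIV"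
    by (rule has_sum_add[OF Suc sh])
  then show ?case by (simp add: algebra_simps)
qed

lemma has_sum_remove:
  fixes f :: "'a \<Rightarrow> real"
  assumes "(f has_sum S) A" "x \<in> A"
  shows "(f has_sum (S - f x)) (A - {x})"
proof -
  have "f summable_on (A - {x})" using assms summable_on_subset by (metis Diff_subset has_sum_imp_summable)
  then obtain S' where S': "(f has_sum S') (A - {x})" by (auto simp: summable_on_def)
  have "(f has_sum (f x + S')) (insert x (A - {x}))" by (rule has_sum_insert[OF _ S']) auto
  then have "(f has_sum (f x + S')) A" using assms(2) by (simp add: insert_absorb)
  then have "S = f x + S'" using assms(1) has_sum_unique by blast
  then show ?thesis using S' by simp
qed

lemma has_sum_single:
  fixes c :: real
  assumes "a \<in> A"
  shows "((\<lambda>k. if k = a then c else 0) has_sum c) A"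
  by (rule has_sum_finite_neutralI[of "{a}"]) (use assms in auto)

definition psi :: "real \<Rightarrow> int \<Rightarrow> real" where
  "psi t k = pi\<^sup>2 * real_of_int k / Q t k"

lemma invQ_summable: "t > 0 \<Longrightarrow> (\<lambda>k. 1 / Q t k) summable_on UNIV"
  using cot_has_sum has_sum_imp_summable by blast

lemma int_abs_le_sq: "\<bar>real_of_int k\<bar> \<le> (real_of_int k)\<^sup>2"
proof (cases "k = 0")
  case False
  then have "1 \<le> \<bar>real_of_int k\<bar>" by linarith
  then have "\<bar>real_of_int k\<bar> * 1 \<le> \<bar>real_of_int k\<bar> * \<bar>real_of_int k\<bar>" by (intro mult_left_mono) auto
  then show ?thesis by (simp add: power2_eq_square abs_mult_self_eq)
qed simp

lemma psi_minus: "psi t (- k) = - psi t k"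
  by (simp add: psi_def)

lemma psi_lim: "(\<lambda>N::nat. psi t (int N)) \<longlonglongrightarrow> 0"
proof -
  have "(\<lambda>N::nat. pi\<^sup>2 * real N / (t\<^sup>2 + pi\<^sup>2 * (real N)\<^sup>2)) \<longlonglongrightarrow> 0"
    by real_asymp
  then show ?thesis by (simp add: psi_def Q_def)
qed

lemma psi_lim': "(\<lambda>N::nat. psi t (- int N)) \<longlonglongrightarrow> 0"
  using tendsto_minus[OF psi_lim[of t]] by (simp add: psi_minus)

lemma d_bound:
  assumes t: "t > 0"
  shows "\<bar>psi t k - psi t (k - 1)\<bar> \<le> 2 * pi\<^sup>2 / Q t (k - 1)"
proof -
  define x where "x = real_of_int k"
  have Q1: "Q t k = t\<^sup>2 + pi\<^sup>2 * x\<^sup>2" "Q t (k - 1) = t\<^sup>2 + pi\<^sup>2 * (x - 1)\<^sup>2"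
    by (simp_all add: Q_def x_def)
  have p1: "Q t k > 0" "Q t (k - 1) > 0" using t by (simp_all add: Q_pos)
  have e: "psi t k - psi t (k - 1) = pi\<^sup>2 * (t\<^sup>2 - pi\<^sup>2 * x * (x - 1)) / (Q t k * Q t (k - 1))"
  proof -
    have "psi t k - psi t (k - 1) = (pi\<^sup>2 * x * Q t (k - 1) - pi\<^sup>2 * (x - 1) * Q t k) / (Q t k * Q t (k - 1))"
      using p1 by (simp add: psi_def x_def diff_frac_eq)
    also have "pi\<^sup>2 * x * Q t (k - 1) - pi\<^sup>2 * (x - 1) * Q t k = pi\<^sup>2 * (t\<^sup>2 - pi\<^sup>2 * x * (x - 1))"
      unfolding Q1 by (simp add: algebra_simps power2_eq_square)
    finally show ?thesis .
  qed
  have ax: "\<bar>x\<bar> \<le> x\<^sup>2" unfolding x_def by (rule int_abs_le_sq)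
  have b: "\<bar>t\<^sup>2 - pi\<^sup>2 * x * (x - 1)\<bar> \<le> 2 * Q t k"
  proof -
    have "\<bar>x * (x - 1)\<bar> \<le> 2 * x\<^sup>2" using ax
      by (simp add: abs_mult power2_eq_square algebra_simps)
    then have "pi\<^sup>2 * \<bar>x * (x - 1)\<bar> \<le> pi\<^sup>2 * (2 * x\<^sup>2)" by (intro mult_left_mono) auto
    moreover have "\<bar>t\<^sup>2 - pi\<^sup>2 * x * (x - 1)\<bar> \<le> t\<^sup>2 + pi\<^sup>2 * \<bar>x * (x - 1)\<bar>"
      by (rule order_trans[OF abs_triangle_ineq4]) (simp add: abs_mult mult.assoc)
    moreover have "t\<^sup>2 \<ge> 0" by simp
    moreover have "pi\<^sup>2 * (2 * x\<^sup>2) = 2 * (pi\<^sup>2 * x\<^sup>2)" by simp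
    ultimately show ?thesis unfolding Q1 by (smt (verit))
  qed
  have "\<bar>psi t k - psi t (k - 1)\<bar> = pi\<^sup>2 * \<bar>t\<^sup>2 - pi\<^sup>2 * x * (x - 1)\<bar> / (Q t k * Q t (k - 1))"
    using p1 by (simp add: e abs_mult abs_divide)
  also have "\<dots> \<le> pi\<^sup>2 * (2 * Q t k) / (Q t k * Q t (k - 1))"
    using p1 b by (intro divide_right_mono mult_left_mono) auto
  also have "\<dots> = 2 * pi\<^sup>2 / Q t (k - 1)" using p1 by (simp add: field_simps)
  finally show ?thesis .
qed

lemma has_sum_diff:
  fixes f g :: "'a \<Rightarrow> real"
  assumes h1: "(f has_sum a) A" and h2: "(g has_sum b) A"
  shows "((\<lambda>x. f x - g x) has_sum (a - b)) A"
  using has_sum_add[OF h1 has_sum_uminusI[OF h2]] by simp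

lemma invQ_shift_summable:
  assumes t: "t > 0"
  shows "(\<lambda>k. 1 / Q t (k - 1)) summable_on UNIV"
proof -
  have "((\<lambda>k. 1 / Q t k) has_sum (cosh t / (t * sinh t))) UNIV = ((\<lambda>k. 1 / Q t (k - 1)) has_sum (cosh t / (t * sinh t))) UNIV"
    by (rule has_sum_reindex_bij_witness[where j="\<lambda>k. k + 1" and i="\<lambda>k. k - 1"]) auto
  then show ?thesis using cot_has_sum[OF t] has_sum_imp_summable by blast
qed

lemma d_has_sum:
  assumes t: "t > 0"
  shows "((\<lambda>k. psi t k - psi t (k - 1)) has_sum 0) UNIV"
proof (rule telescope_has_sum[OF _ psi_lim psi_lim'])
  have "(\<lambda>k. 2 * pi\<^sup>2 * (1 / Q t (k - 1))) summable_on UNIV"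
    by (rule summable_on_cmult_right[OF invQ_shift_summable[OF t]])
  then show "(\<lambda>k. psi t k - psi t (k - 1)) summable_on UNIV"
    by (rule summable_cmp) (use d_bound[OF t] in simp)
qed

lemma a_has_sum:
  assumes t: "t > 0"
  shows "((\<lambda>k. psi t k - psi t (k - int m)) has_sum (- psi t (int m))) (UNIV - {int m})"
proof -
  have "((\<lambda>k. psi t k - psi t (k - int m)) has_sum 0) UNIV"
    by (rule shift_has_sum[OF d_has_sum[OF t]])
  from has_sum_remove[OF this, of "int m"] show ?thesis by (simp add: psi_def)
qed

lemma c_bound:
  assumes t: "t > 0" and j: "j \<noteq> 0"
  shows "\<bar>psi t j - 1 / real_of_int j\<bar> \<le> t\<^sup>2 / Q t j"
proof -
  have Qp: "Q t j > 0" using t by (simp add: Q_pos)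
  have e: "psi t j - 1 / real_of_int j = - t\<^sup>2 / (real_of_int j * Q t j)"
  proof -
    have "psi t j - 1 / real_of_int j = (pi\<^sup>2 * real_of_int j * real_of_int j - 1 * Q t j) / (Q t j * real_of_int j)"
      using Qp j by (simp add: psi_def diff_frac_eq)
    also have "pi\<^sup>2 * real_of_int j * real_of_int j - 1 * Q t j = - t\<^sup>2"
      by (simp add: Q_def power2_eq_square)
    finally show ?thesis by (simp add: mult.commute)
  qed
  have "1 \<le> \<bar>real_of_int j\<bar>" using j by linarith
  then have "\<bar>real_of_int j\<bar> * Q t j \<ge> 1 * Q t j" using Qp by (intro mult_right_mono) auto
  then show ?thesis unfolding e using Qp
    by (simp add: abs_mult abs_divide) (intro divide_left_mono, auto)
qed

lemma c_has_sum:
  assumes t: "t > 0"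
  shows "((\<lambda>j. psi t j - 1 / real_of_int j) has_sum 0) (UNIV - {0})"
proof -
  have "(\<lambda>j. t\<^sup>2 * (1 / Q t j)) summable_on (UNIV - {0})"
    using summable_on_cmult_right[OF invQ_summable[OF t]] summable_on_subset by blast
  then have "(\<lambda>j. psi t j - 1 / real_of_int j) summable_on (UNIV - {0})"
    by (rule summable_cmp) (use c_bound[OF t] in simp)
  then obtain S where S: "((\<lambda>j. psi t j - 1 / real_of_int j) has_sum S) (UNIV - {0})"
    by (auto simp: summable_on_def)
  have "S = 0" by (rule has_sum_odd_zero[OF S]) (auto simp: psi_minus)
  then show ?thesis using S by simp
qed

lemma b_has_sum:
  assumes t: "t > 0"
  shows "((\<lambda>k. psi t (k - n) - 1 / real_of_int (k - n)) has_sum 0) (UNIV - {n})"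
proof -
  have "((\<lambda>j. psi t j - 1 / real_of_int j) has_sum 0) (UNIV - {0}) =
        ((\<lambda>k. psi t (k - n) - 1 / real_of_int (k - n)) has_sum 0) (UNIV - {n})"
    by (rule has_sum_reindex_bij_witness[where j="\<lambda>k. k + n" and i="\<lambda>k. k - n"]) auto
  then show ?thesis using c_has_sum[OF t] by simp
qed

lemma alg:
  fixes c s N D t :: real
  assumes t: "t > 0" and s: "s > 0" and N: "N \<noteq> 0" and D: "D = t\<^sup>2 + pi\<^sup>2 * N\<^sup>2"
  shows "c / N - t * s * ((- (pi\<^sup>2 * N / D) + 0) * (1 / D) + pi\<^sup>2 * N / D * (c / (t * s) - 1 / D))
       = (t\<^sup>2 * c / D + 2 * pi\<^sup>2 * N\<^sup>2 * t * s / D\<^sup>2) / N"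
proof -
  have Dp: "D > 0" using D t by (simp add: add_pos_nonneg)
  have "c / N - t * s * ((- (pi\<^sup>2 * N / D) + 0) * (1 / D) + pi\<^sup>2 * N / D * (c / (t * s) - 1 / D))
      = c / N + 2 * pi\<^sup>2 * N * t * s / D\<^sup>2 - pi\<^sup>2 * N * c / D"
    using t s Dp by (simp add: field_simps power2_eq_square)
  also have "\<dots> = (t\<^sup>2 * c / D + 2 * pi\<^sup>2 * N\<^sup>2 * t * s / D\<^sup>2) / N"
  proof -
    have "c / N - pi\<^sup>2 * N * c / D = t\<^sup>2 * c / D / N"
      using N Dp by (simp add: field_simps D power2_eq_square)
    then show ?thesis using N by (simp add: field_simps power2_eq_square)
  qed
  finally show ?thesis .
qed

definition Gf :: "int \<Rightarrow> real \<Rightarrow> real" where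
  "Gf k t = (if k = 0 then cosh t else 0) - t * sinh t / Q t k"

lemma Gsum:
  fixes t :: real and n :: int
  assumes t: "t > 0" and n: "n > 0"
  shows "((\<lambda>k. Gf k t / real_of_int (n - k)) has_sum
     ((t\<^sup>2 * cosh t / Q t n + 2 * pi\<^sup>2 * (real_of_int n)\<^sup>2 * t * sinh t / (Q t n)\<^sup>2) / real_of_int n)) (UNIV - {n})"
proof -
  define D where "D = Q t n"
  define C where "C = cosh t / (t * sinh t)"
  have Dp: "D > 0" using t by (simp add: D_def Q_pos)
  have sp: "sinh t > 0" using t by simp
  have Qp: "\<And>k. Q t k > 0" using t by (simp add: Q_pos)
  obtain m where m: "n = int m" using n by (metis less_imp_le nonneg_int_cases)
  have h1: "((\<lambda>k. 1 / Q t k) has_sum (C - 1 / D)) (UNIV - {n})"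
    using has_sum_remove[OF cot_has_sum[OF t], of n] by (simp add: C_def D_def)
  have h2: "((\<lambda>k. psi t k - psi t (k - n)) has_sum (- psi t n)) (UNIV - {n})"
    using a_has_sum[OF t, of m] m by simp
  have h3: "((\<lambda>k. psi t (k - n) - 1 / real_of_int (k - n)) has_sum 0) (UNIV - {n})"
    by (rule b_has_sum[OF t])
  have h4: "((\<lambda>k. ((psi t k - psi t (k - n)) + (psi t (k - n) - 1 / real_of_int (k - n))) * (1 / D)
              + pi\<^sup>2 * real_of_int n / D * (1 / Q t k)) has_sum
            ((- psi t n + 0) * (1 / D) + pi\<^sup>2 * real_of_int n / D * (C - 1 / D))) (UNIV - {n})"
    by (intro has_sum_add has_sum_cmult_left has_sum_cmult_right h1 h2 h3)
  have eq: "((psi t k - psi t (k - n)) + (psi t (k - n) - 1 / real_of_int (k - n))) * (1 / D)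
              + pi\<^sup>2 * real_of_int n / D * (1 / Q t k) = 1 / (real_of_int (n - k) * Q t k)"
    if "k \<in> UNIV - {n}" for k
  proof -
    have nk: "real_of_int (n - k) \<noteq> 0" using that by auto
    have "((psi t k - psi t (k - n)) + (psi t (k - n) - 1 / real_of_int (k - n))) * (1 / D)
              + pi\<^sup>2 * real_of_int n / D * (1 / Q t k)
         = (pi\<^sup>2 * real_of_int k / Q t k + 1 / real_of_int (n - k)) * (1 / D) + pi\<^sup>2 * real_of_int n / D * (1 / Q t k)"
    proof -
      have "real_of_int (k - n) = - real_of_int (n - k)" by simp
      then have "(psi t k - psi t (k - n)) + (psi t (k - n) - 1 / real_of_int (k - n)) = pi\<^sup>2 * real_of_int k / Q t k + 1 / real_of_int (n - k)"
        by (simp add: psi_def) (metis minus_diff_eq minus_divide_right)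
      then show ?thesis by simp
    qed
    also have "\<dots> = (pi\<^sup>2 * real_of_int k / Q t k + 1 / real_of_int (n - k) + pi\<^sup>2 * real_of_int n / Q t k) / D"
      using nk Dp Qp[of k] by (simp add: field_simps)
    also have "pi\<^sup>2 * real_of_int k / Q t k + 1 / real_of_int (n - k) + pi\<^sup>2 * real_of_int n / Q t k
        = D / (real_of_int (n - k) * Q t k)"
      using nk Qp[of k] unfolding D_def by (simp add: field_simps) (simp add: Q_def algebra_simps power2_eq_square)
    finally show ?thesis using Dp by simp
  qed
  have h5: "((\<lambda>k. 1 / (real_of_int (n - k) * Q t k)) has_sum
            ((- psi t n + 0) * (1 / D) + pi\<^sup>2 * real_of_int n / D * (C - 1 / D))) (UNIV - {n})"
    using h4 by (rule has_sum_cong[THEN iffD1, rotated]) (use eq in auto)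
  have h6: "((\<lambda>k. (if k = 0 then cosh t / real_of_int n else 0) - t * sinh t * (1 / (real_of_int (n - k) * Q t k))) has_sum
     (cosh t / real_of_int n - t * sinh t * ((- psi t n + 0) * (1 / D) + pi\<^sup>2 * real_of_int n / D * (C - 1 / D)))) (UNIV - {n})"
    by (intro has_sum_diff has_sum_single has_sum_cmult_right h5) (use n in auto)
  have eq2: "(if k = 0 then cosh t / real_of_int n else 0) - t * sinh t * (1 / (real_of_int (n - k) * Q t k))
      = Gf k t / real_of_int (n - k)" if "k \<in> UNIV - {n}" for k
  proof -
    have "Gf k t / real_of_int (n - k) = (if k = 0 then cosh t else 0) / real_of_int (n - k) - (t * sinh t / Q t k) / real_of_int (n - k)"
      unfolding Gf_def by (rule diff_divide_distrib)
    moreover have "(if k = 0 then cosh t else 0) / real_of_int (n - k) = (if k = 0 then cosh t / real_of_int n else 0)"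
      by auto
    moreover have "(t * sinh t / Q t k) / real_of_int (n - k) = t * sinh t * (1 / (real_of_int (n - k) * Q t k))"
      by (simp add: mult.commute)
    ultimately show ?thesis by simp
  qed
  have val: "cosh t / real_of_int n - t * sinh t * ((- psi t n + 0) * (1 / D) + pi\<^sup>2 * real_of_int n / D * (C - 1 / D))
      = (t\<^sup>2 * cosh t / Q t n + 2 * pi\<^sup>2 * (real_of_int n)\<^sup>2 * t * sinh t / (Q t n)\<^sup>2) / real_of_int n"
  proof -
    have p: "psi t n = pi\<^sup>2 * real_of_int n / D" by (simp add: psi_def D_def)
    have Dq: "D = t\<^sup>2 + pi\<^sup>2 * (real_of_int n)\<^sup>2" by (simp add: D_def Q_def)
    have "cosh t / real_of_int n - t * sinh t * ((- psi t n + 0) * (1 / D) + pi\<^sup>2 * real_of_int n / D * (C - 1 / D))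
      = (t\<^sup>2 * cosh t / D + 2 * pi\<^sup>2 * (real_of_int n)\<^sup>2 * t * sinh t / D\<^sup>2) / real_of_int n"
      unfolding p C_def by (rule alg[OF t sp _ Dq]) (use n in auto)
    then show ?thesis unfolding D_def .
  qed
  have "((\<lambda>k. Gf k t / real_of_int (n - k)) has_sum
     (cosh t / real_of_int n - t * sinh t * ((- psi t n + 0) * (1 / D) + pi\<^sup>2 * real_of_int n / D * (C - 1 / D)))) (UNIV - {n})"
    using h6 by (rule has_sum_cong[THEN iffD1, rotated]) (use eq2 in auto)
  then show ?thesis unfolding val .
qed

lemma has_sum_integral:
  fixes \<phi> :: "int \<Rightarrow> real \<Rightarrow> real" and A :: "int set" and D N :: "real set"
    and h \<Phi> :: "real \<Rightarrow> real"
  assumes inf: "infinite A"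
    and int: "\<And>k. k \<in> A \<Longrightarrow> \<phi> k integrable_on D"
    and h: "h integrable_on D"
    and bound: "\<And>x F. x \<in> D \<Longrightarrow> finite F \<Longrightarrow> F \<subseteq> A \<Longrightarrow> (\<Sum>k\<in>F. \<bar>\<phi> k x\<bar>) \<le> h x"
    and N: "negligible N"
    and lim: "\<And>x. x \<in> D - N \<Longrightarrow> ((\<lambda>k. \<phi> k x) has_sum \<Phi> x) A"
  shows "((\<lambda>k. integral D (\<phi> k)) has_sum integral D \<Phi>) A"
proof -
  have b1: "\<bar>\<phi> k x\<bar> \<le> h x" if "k \<in> A" "x \<in> D" for k x
    using bound[of x "{k}"] that by simp
  have ai: "\<phi> k absolutely_integrable_on D" if "k \<in> A" for k
    by (rule absolutely_integrable_integrable_bound[OF _ int[OF that] h]) (use b1 that in simp)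
  have aint: "(\<lambda>x. \<bar>\<phi> k x\<bar>) integrable_on D" if "k \<in> A" for k
    using ai[OF that] by (simp add: absolutely_integrable_on_def)
  have hi: "integral D (\<lambda>x. \<Sum>k\<in>F. \<bar>\<phi> k x\<bar>) \<le> integral D h" if "finite F" "F \<subseteq> A" for F
    by (rule integral_le) (use that aint h bound in \<open>auto intro!: integrable_sum\<close>)
  have summ: "(\<lambda>k. integral D (\<phi> k)) summable_on A"
  proof -
    have "(\<lambda>k. \<bar>integral D (\<phi> k)\<bar>) summable_on A"
    proof (rule nonneg_bdd_above_summable_on)
      show "bdd_above (sum (\<lambda>k. \<bar>integral D (\<phi> k)\<bar>) ` {F. F \<subseteq> A \<and> finite F})"
      proof (rule bdd_aboveI2)
        fix F assume F: "F \<in> {F. F \<subseteq> A \<and> finite F}"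
        have "(\<Sum>k\<in>F. \<bar>integral D (\<phi> k)\<bar>) \<le> (\<Sum>k\<in>F. integral D (\<lambda>x. \<bar>\<phi> k x\<bar>))"
        proof (rule sum_mono)
          fix k assume "k \<in> F"
          then have k: "k \<in> A" using F by auto
          show "\<bar>integral D (\<phi> k)\<bar> \<le> integral D (\<lambda>x. \<bar>\<phi> k x\<bar>)"
            using integral_norm_bound_integral[OF int[OF k] aint[OF k]] by simp
        qed
        also have "\<dots> = integral D (\<lambda>x. \<Sum>k\<in>F. \<bar>\<phi> k x\<bar>)"
          using F aint by (subst integral_sum) auto
        also have "\<dots> \<le> integral D h" using F hi by auto
        finally show "(\<Sum>k\<in>F. \<bar>integral D (\<phi> k)\<bar>) \<le> integral D h" .
      qed
    qed auto
    then show ?thesis using summable_on_iff_abs_summable_on_real by force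
  qed
  have cA: "countable A" by (rule countable_subset[of _ UNIV]) auto
  define e where "e = from_nat_into A"
  have bij: "bij_betw e UNIV A" unfolding e_def by (rule bij_betw_from_nat_into[OF cA inf])
  have eA: "e i \<in> A" for i using bij by (auto simp: bij_betw_def)
  have inje: "inj e" using bij by (auto simp: bij_betw_def)
  define P where "P m x = (\<Sum>i<m. \<phi> (e i) x)" for m x
  have Pint: "P m integrable_on (D - N)" for m
  proof -
    have "P m integrable_on D" unfolding P_def by (intro integrable_sum int eA) auto
    then show ?thesis by (rule integrable_spike_set) (auto intro: negligible_subset[OF N])
  qed
  have hint: "h integrable_on (D - N)"
    using h by (rule integrable_spike_set) (auto intro: negligible_subset[OF N])
  have Pb: "norm (P m x) \<le> h x" if "x \<in> D - N" for m x
  proof -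
    have "norm (P m x) \<le> (\<Sum>i<m. \<bar>\<phi> (e i) x\<bar>)" unfolding P_def by (simp add: sum_abs)
    also have "\<dots> = (\<Sum>k\<in>e ` {..<m}. \<bar>\<phi> k x\<bar>)"
      using inje by (subst sum.reindex) (auto intro: inj_on_subset)
    also have "\<dots> \<le> h x" using that eA by (intro bound) auto
    finally show ?thesis .
  qed
  have Plim: "(\<lambda>m. P m x) \<longlonglongrightarrow> \<Phi> x" if "x \<in> D - N" for x
  proof -
    have "((\<lambda>i. \<phi> (e i) x) has_sum \<Phi> x) UNIV"
      using has_sum_reindex_bij_betw[OF bij, of "\<lambda>k. \<phi> k x"] lim[OF that] by simp
    then have "(\<lambda>i. \<phi> (e i) x) sums \<Phi> x" by (rule has_sum_imp_sums)
    then show ?thesis by (simp add: sums_def P_def)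
  qed
  have DC: "(\<lambda>m. integral (D - N) (P m)) \<longlonglongrightarrow> integral (D - N) \<Phi>"
    by (rule dominated_convergence(2)[OF Pint hint Pb Plim])
  have eqP: "integral (D - N) (P m) = (\<Sum>i<m. integral D (\<phi> (e i)))" for m
  proof -
    have "integral (D - N) (P m) = integral D (P m)"
      by (rule integral_spike_set) (auto intro: negligible_subset[OF N])
    also have "\<dots> = (\<Sum>i<m. integral D (\<phi> (e i)))"
      unfolding P_def by (rule integral_sum) (auto intro: int eA)
    finally show ?thesis .
  qed
  have eqPhi: "integral (D - N) \<Phi> = integral D \<Phi>"
    by (rule integral_spike_set) (auto intro: negligible_subset[OF N])
  have S1: "(\<lambda>i. integral D (\<phi> (e i))) sums integral D \<Phi>"
    using DC unfolding eqP eqPhi sums_def .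
  obtain S where S: "((\<lambda>k. integral D (\<phi> k)) has_sum S) A" using summ by (auto simp: summable_on_def)
  have "((\<lambda>i. integral D (\<phi> (e i))) has_sum S) UNIV"
    using has_sum_reindex_bij_betw[OF bij, of "\<lambda>k. integral D (\<phi> k)"] S by simp
  then have "(\<lambda>i. integral D (\<phi> (e i))) sums S" by (rule has_sum_imp_sums)
  then have "S = integral D \<Phi>" using S1 sums_unique2 by blast
  then show ?thesis using S by simp
qed

lemma mono_from_deriv:
  fixes f f' :: "real \<Rightarrow> real"
  assumes d: "\<And>x. (f has_real_derivative f' x) (at x)" and p: "\<And>x. 0 < x \<Longrightarrow> f' x \<ge> 0" and t: "t \<ge> 0"
  shows "f 0 \<le> f t"
proof (rule DERIV_nonneg_imp_increasing_open[OF t])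
  show "\<And>x. 0 < x \<Longrightarrow> x < t \<Longrightarrow> \<exists>y. (f has_real_derivative y) (at x) \<and> 0 \<le> y"
    using d p by blast
  show "continuous_on {0..t} f"
    using d by (meson DERIV_isCont continuous_at_imp_continuous_on)
qed

lemma sinh_ge:
  fixes t :: real
  assumes t: "t \<ge> 0"
  shows "sinh t \<ge> t"
proof -
  have d: "((\<lambda>t. sinh t - t) has_real_derivative cosh t - 1) (at t)" for t :: real
    by (auto intro!: derivative_eq_intros)
  show ?thesis using mono_from_deriv[of "\<lambda>t. sinh t - t", OF d _ t] cosh_real_ge_1 by simp
qed

lemma I2:
  fixes t :: real
  assumes t: "t \<ge> 0"
  shows "t * cosh t - sinh t \<ge> t ^ 3 / 3"
proof -
  have d: "((\<lambda>t. t * cosh t - sinh t - t ^ 3 / 3) has_real_derivative t * sinh t - t\<^sup>2) (at t)" for t :: real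
    by (auto intro!: derivative_eq_intros simp: power2_eq_square)
  have p: "0 \<le> x * sinh x - x\<^sup>2" if "0 < x" for x :: real
    using sinh_ge[of x] that by (simp add: power2_eq_square mult_left_mono)
  show ?thesis using mono_from_deriv[of "\<lambda>t. t * cosh t - sinh t - t ^ 3 / 3", OF d p t] by simp
qed

lemma I3:
  fixes t :: real
  assumes t: "t \<ge> 0"
  shows "t * cosh t - sinh t \<le> t\<^sup>2 * sinh t"
proof -
  have d: "((\<lambda>t. t\<^sup>2 * sinh t - (t * cosh t - sinh t)) has_real_derivative t * sinh t + t\<^sup>2 * cosh t) (at t)" for t :: real
    by (auto intro!: derivative_eq_intros simp: power2_eq_square algebra_simps)
  have p: "0 \<le> x * sinh x + x\<^sup>2 * cosh x" if "0 < x" for x :: real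
    using that by (intro add_nonneg_nonneg mult_nonneg_nonneg) (auto intro: order_trans[OF _ cosh_real_ge_1])
  show ?thesis using mono_from_deriv[of "\<lambda>t. t\<^sup>2 * sinh t - (t * cosh t - sinh t)", OF d p t] by simp
qed

definition G0 :: "real \<Rightarrow> real" where "G0 t = cosh t - sinh t / t"

lemma G0_lower: "t > 0 \<Longrightarrow> G0 t \<ge> t\<^sup>2 / 3"
proof -
  assume t: "t > 0"
  have "t * cosh t - sinh t \<ge> t ^ 3 / 3" using I2 t by simp
  then have "(t * cosh t - sinh t) / t \<ge> (t ^ 3 / 3) / t" using t by (intro divide_right_mono) auto
  then show ?thesis using t by (simp add: G0_def diff_divide_distrib power2_eq_square power3_eq_cube)
qed

lemma G0_upper: "t > 0 \<Longrightarrow> G0 t \<le> t * sinh t"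
proof -
  assume t: "t > 0"
  have "t * cosh t - sinh t \<le> t\<^sup>2 * sinh t" using I3 t by simp
  then have "(t * cosh t - sinh t) / t \<le> (t\<^sup>2 * sinh t) / t" using t by (intro divide_right_mono) auto
  then show ?thesis using t by (simp add: G0_def diff_divide_distrib power2_eq_square)
qed

lemma G0_nonneg: "t \<ge> 0 \<Longrightarrow> G0 t \<ge> 0"
proof (cases "t = 0")
  case False
  assume "t \<ge> 0"
  then have "t > 0" using False by simp
  then show ?thesis using G0_lower[of t] by (smt (verit) zero_le_power2 divide_nonneg_pos)
qed (simp add: G0_def)

lemma G0_0 [simp]: "G0 0 = 1" by (simp add: G0_def)

lemma Gf0: "Gf 0 t = G0 t"
  by (cases "t = 0") (simp_all add: Gf_def G0_def Q_def power2_eq_square)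

lemma borel_leb: "(f :: real \<Rightarrow> real) \<in> borel_measurable borel \<Longrightarrow> f \<in> borel_measurable (lebesgue_on S)"
  by (simp add: measurable_completion measurable_restrict_space1)
lemma sinh_meas [measurable]: "(sinh :: real \<Rightarrow> real) \<in> borel_measurable borel"
  by (intro borel_measurable_continuous_onI continuous_intros)
lemma cosh_meas [measurable]: "(cosh :: real \<Rightarrow> real) \<in> borel_measurable borel"
  by (intro borel_measurable_continuous_onI continuous_intros)

lemma int_by_bound:
  fixes f g :: "real \<Rightarrow> real"
  assumes "f \<in> borel_measurable borel" "g integrable_on S" "\<And>x. x \<in> S \<Longrightarrow> \<bar>f x\<bar> \<le> g x" "S \<in> sets lebesgue"
  shows "f integrable_on S"
  using measurable_bounded_by_integrable_imp_integrable_real[OF borel_leb[OF assms(1)] assms(2-4)] .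

lemma Gf_meas [measurable]: "Gf k \<in> borel_measurable borel"
  unfolding Gf_def[abs_def] Q_def by measurable

lemma Gf_sum0:
  assumes t: "t > 0"
  shows "((\<lambda>k. Gf k t) has_sum 0) UNIV"
proof -
  have "((\<lambda>k. t * sinh t * (1 / Q t k)) has_sum (t * sinh t * (cosh t / (t * sinh t)))) UNIV"
    by (rule has_sum_cmult_right[OF cot_has_sum[OF t]])
  moreover have "t * sinh t * (cosh t / (t * sinh t)) = cosh t" using t by simp
  ultimately have h: "((\<lambda>k. t * sinh t / Q t k) has_sum cosh t) UNIV" by simp
  have "((\<lambda>k. (if k = 0 then cosh t else 0) - t * sinh t / Q t k) has_sum (cosh t - cosh t)) UNIV"
    by (intro has_sum_diff has_sum_single h) auto
  then show ?thesis by (simp add: Gf_def[abs_def])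
qed

lemma Gf_abs_sum:
  assumes t: "t \<ge> 0" and F: "finite F"
  shows "(\<Sum>k\<in>F. \<bar>Gf k t\<bar>) \<le> 2 * G0 t"
proof (cases "t = 0")
  case True
  have "(\<Sum>k\<in>F. \<bar>Gf k t\<bar>) = (\<Sum>k\<in>F. if k = 0 then 1 else 0)"
    using True by (intro sum.cong) (auto simp: Gf_def)
  also have "\<dots> \<le> 1" using F by (simp add: sum.If_cases)
  finally show ?thesis using True by simp
next
  case False
  then have tp: "t > 0" using t by simp
  define g where "g k = t * sinh t / Q t k" for k
  have g0: "g k \<ge> 0" for k using tp by (simp add: g_def Q_nonneg)
  have "((\<lambda>k. t * sinh t * (1 / Q t k)) has_sum (t * sinh t * (cosh t / (t * sinh t)))) UNIV"
    by (rule has_sum_cmult_right[OF cot_has_sum[OF tp]])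
  moreover have "t * sinh t * (cosh t / (t * sinh t)) = cosh t" using tp by simp
  ultimately have "((\<lambda>k. t * sinh t / Q t k) has_sum cosh t) UNIV" by simp
  then have h: "(g has_sum cosh t) UNIV" unfolding g_def[abs_def] .
  have "(g has_sum (cosh t - g 0)) (UNIV - {0})" using has_sum_remove[OF h] by simp
  moreover have "cosh t - g 0 = G0 t" using tp by (simp add: g_def G0_def Q_def power2_eq_square)
  ultimately have h2: "(g has_sum G0 t) (UNIV - {0})" by simp
  have abs: "\<bar>Gf k t\<bar> = (if k = 0 then G0 t else g k)" for k
  proof (cases "k = 0")
    case True then show ?thesis using G0_nonneg[of t] t by (simp add: Gf0)
  next
    case False
    then have "Gf k t = - g k" by (simp add: Gf_def g_def)
    then show ?thesis using False g0[of k] by simp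
  qed
  have "(\<Sum>k\<in>F. \<bar>Gf k t\<bar>) \<le> G0 t + (\<Sum>k\<in>F - {0}. g k)"
  proof (cases "0 \<in> F")
    case True
    then have "(\<Sum>k\<in>F. \<bar>Gf k t\<bar>) = \<bar>Gf 0 t\<bar> + (\<Sum>k\<in>F - {0}. \<bar>Gf k t\<bar>)"
      using F by (simp add: sum.remove)
    also have "\<dots> = G0 t + (\<Sum>k\<in>F - {0}. g k)" by (simp add: abs)
    finally show ?thesis by simp
  next
    case False
    then have "(\<Sum>k\<in>F. \<bar>Gf k t\<bar>) = (\<Sum>k\<in>F - {0}. g k)" by (intro sum.cong) (auto simp: abs)
    then show ?thesis using G0_nonneg[of t] t by simp
  qed
  also have "(\<Sum>k\<in>F - {0}. g k) \<le> G0 t"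
    by (rule finite_sum_le_has_sum[OF h2]) (use F g0 in auto)
  finally show ?thesis by simp
qed

lemma Gf_abs: "t \<ge> 0 \<Longrightarrow> \<bar>Gf k t\<bar> \<le> 2 * G0 t"
  using Gf_abs_sum[of t "{k}"] by simp

lemma G0_le_cosh: "t \<ge> 0 \<Longrightarrow> G0 t \<le> cosh t"
  unfolding G0_def by (cases "t = 0") (auto intro!: divide_nonneg_pos)

lemma Gf_int: "Gf k integrable_on {0..y}"
proof (rule int_by_bound[OF Gf_meas])
  show "(\<lambda>t. 2 * cosh t) integrable_on {0..y}"
    by (intro integrable_continuous_interval continuous_intros)
  show "\<bar>Gf k t\<bar> \<le> 2 * cosh t" if "t \<in> {0..y}" for t
    using Gf_abs[of t k] G0_le_cosh[of t] that by auto
qed auto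

definition Ik :: "int \<Rightarrow> real \<Rightarrow> real" where "Ik k y = integral {0..y} (Gf k)"

lemma G0_int: "G0 integrable_on {0..y}"
  using Gf_int[of 0 y] by (simp add: Gf0[abs_def])

lemma Ik_sum0:
  assumes y: "y \<ge> 0"
  shows "((\<lambda>k. Ik k y) has_sum 0) UNIV"
proof -
  have "((\<lambda>k. integral {0..y} (Gf k)) has_sum integral {0..y} (\<lambda>_. 0)) UNIV"
  proof (rule has_sum_integral[where h="\<lambda>t. 2 * G0 t" and N="{0}"])
    show "(\<lambda>t. 2 * G0 t) integrable_on {0..y}" using G0_int by simp
    show "(\<Sum>k\<in>F. \<bar>Gf k x\<bar>) \<le> 2 * G0 x" if "x \<in> {0..y}" "finite F" for x F
      using Gf_abs_sum that by auto
    show "((\<lambda>k. Gf k x) has_sum 0) UNIV" if "x \<in> {0..y} - {0}" for x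
      using Gf_sum0 that by auto
  qed (auto simp: Gf_int)
  then show ?thesis by (simp add: Ik_def[abs_def])
qed

definition Ph :: "int \<Rightarrow> real \<Rightarrow> real" where "Ph n y = y\<^sup>2 * sinh y / Q y n"

lemma Ph_deriv:
  assumes n: "n \<noteq> 0"
  shows "(Ph n has_real_derivative (y\<^sup>2 * cosh y / Q y n + 2 * pi\<^sup>2 * (real_of_int n)\<^sup>2 * y * sinh y / (Q y n)\<^sup>2)) (at y)"
proof -
  have Qp: "Q y n > 0" using n by (simp add: Q_pos')
  have d: "((\<lambda>y. y\<^sup>2 * sinh y / (y\<^sup>2 + pi\<^sup>2 * (real_of_int n)\<^sup>2)) has_real_derivative
      ((2 * y * sinh y + y\<^sup>2 * cosh y) * Q y n - y\<^sup>2 * sinh y * (2 * y)) / (Q y n)\<^sup>2) (at y)"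
    using Qp by (auto intro!: derivative_eq_intros simp: Q_def power2_eq_square)
  have e: "((2 * y * sinh y + y\<^sup>2 * cosh y) * Q y n - y\<^sup>2 * sinh y * (2 * y)) / (Q y n)\<^sup>2
      = y\<^sup>2 * cosh y / Q y n + 2 * pi\<^sup>2 * (real_of_int n)\<^sup>2 * y * sinh y / (Q y n)\<^sup>2"
  proof -
    have "(2 * y * sinh y + y\<^sup>2 * cosh y) * Q y n - y\<^sup>2 * sinh y * (2 * y)
        = y\<^sup>2 * cosh y * Q y n + 2 * pi\<^sup>2 * (real_of_int n)\<^sup>2 * y * sinh y"
      by (simp add: Q_def algebra_simps power2_eq_square)
    then show ?thesis using Qp by (simp add: field_simps power2_eq_square)
  qed
  show ?thesis using d unfolding e by (simp add: Ph_def[abs_def] Q_def)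
qed

lemma Ik_hilbert:
  assumes y: "y \<ge> 0" and n: "n > 0"
  shows "((\<lambda>k. Ik k y / real_of_int (n - k)) has_sum (Ph n y / real_of_int n)) (UNIV - {n})"
proof -
  define \<Phi> where "\<Phi> t = (t\<^sup>2 * cosh t / Q t n + 2 * pi\<^sup>2 * (real_of_int n)\<^sup>2 * t * sinh t / (Q t n)\<^sup>2) / real_of_int n" for t
  have FTC: "((\<lambda>t. t\<^sup>2 * cosh t / Q t n + 2 * pi\<^sup>2 * (real_of_int n)\<^sup>2 * t * sinh t / (Q t n)\<^sup>2) has_integral (Ph n y - Ph n 0)) {0..y}"
    by (rule fundamental_theorem_of_calculus[OF y])
       (use Ph_deriv[of n] n in \<open>auto simp: has_real_derivative_iff_has_vector_derivative intro: has_vector_derivative_at_within\<close>)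
  have iPhi: "integral {0..y} \<Phi> = Ph n y / real_of_int n"
  proof -
    have "integral {0..y} \<Phi> = integral {0..y} (\<lambda>t. t\<^sup>2 * cosh t / Q t n + 2 * pi\<^sup>2 * (real_of_int n)\<^sup>2 * t * sinh t / (Q t n)\<^sup>2) / real_of_int n"
      unfolding \<Phi>_def by (rule integral_divide)
    then show ?thesis unfolding integral_unique[OF FTC] by (simp add: Ph_def)
  qed
  have "((\<lambda>k. integral {0..y} (\<lambda>t. Gf k t / real_of_int (n - k))) has_sum integral {0..y} \<Phi>) (UNIV - {n})"
  proof (rule has_sum_integral[where h="\<lambda>t. 2 * G0 t" and N="{0}"])
    show "(\<lambda>t. 2 * G0 t) integrable_on {0..y}" using G0_int by simp
    show "(\<lambda>t. Gf k t / real_of_int (n - k)) integrable_on {0..y}" for k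
      using Gf_int by (rule integrable_on_divide)
    show "(\<Sum>k\<in>F. \<bar>Gf k x / real_of_int (n - k)\<bar>) \<le> 2 * G0 x"
      if "x \<in> {0..y}" "finite F" "F \<subseteq> UNIV - {n}" for x F
    proof -
      have "(\<Sum>k\<in>F. \<bar>Gf k x / real_of_int (n - k)\<bar>) \<le> (\<Sum>k\<in>F. \<bar>Gf k x\<bar>)"
      proof (rule sum_mono)
        fix k assume "k \<in> F"
        then have "k \<noteq> n" using that by auto
        then have "1 \<le> \<bar>real_of_int (n - k)\<bar>" by linarith
        then show "\<bar>Gf k x / real_of_int (n - k)\<bar> \<le> \<bar>Gf k x\<bar>"
          by (simp add: abs_divide divide_le_eq mult_le_cancel_left1 abs_mult)
      qed
      also have "\<dots> \<le> 2 * G0 x" using Gf_abs_sum that by auto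
      finally show ?thesis .
    qed
    show "((\<lambda>k. Gf k x / real_of_int (n - k)) has_sum \<Phi> x) (UNIV - {n})" if "x \<in> {0..y} - {0}" for x
      using Gsum[of x n] that n by (auto simp: \<Phi>_def)
  qed auto
  then show ?thesis by (simp add: Ik_def[abs_def] iPhi)
qed

lemma indef_mono:
  fixes f :: "real \<Rightarrow> real"
  assumes int: "\<And>y. f integrable_on {0..y}" and nn: "\<And>t. t \<ge> 0 \<Longrightarrow> f t \<ge> 0"
  shows "mono (\<lambda>y. integral {0..y} f)"
proof (rule monoI)
  fix a b :: real assume ab: "a \<le> b"
  show "integral {0..a} f \<le> integral {0..b} f"
  proof (cases "a < 0")
    case True
    then have "integral {0..a} f = 0" by simp
    moreover have "integral {0..b} f \<ge> 0" by (rule integral_nonneg[OF int]) (use nn in auto)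
    ultimately show ?thesis by simp
  next
    case False
    then show ?thesis using ab nn by (intro integral_subset_le int) auto
  qed
qed

lemma Gf_sign: "t \<ge> 0 \<Longrightarrow> k \<noteq> 0 \<Longrightarrow> Gf k t \<le> 0"
  by (simp add: Gf_def Q_nonneg divide_nonneg_nonneg)

lemma Ik_meas [measurable]: "Ik k \<in> borel_measurable borel"
proof (cases "k = 0")
  case True
  have "mono (Ik 0)" unfolding Ik_def[abs_def]
    by (rule indef_mono[OF Gf_int]) (simp add: Gf0 G0_nonneg)
  then show ?thesis using True borel_measurable_mono by blast
next
  case False
  have "mono (\<lambda>y. integral {0..y} (\<lambda>t. - Gf k t))"
    by (rule indef_mono) (use Gf_int Gf_sign False in \<open>auto intro!: integrable_neg\<close>)
  then have "(\<lambda>y. integral {0..y} (\<lambda>t. - Gf k t)) \<in> borel_measurable borel" by (rule borel_measurable_mono)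
  then have "(\<lambda>y. - integral {0..y} (\<lambda>t. - Gf k t)) \<in> borel_measurable borel" by measurable
  then show ?thesis by (simp add: Ik_def[abs_def])
qed

lemma Ik_sum_abs:
  assumes y: "y \<ge> 0" and F: "finite F"
  shows "(\<Sum>k\<in>F. \<bar>Ik k y\<bar>) \<le> 2 * Ik 0 y"
proof -
  have ai: "(\<lambda>t. \<bar>Gf k t\<bar>) integrable_on {0..y}" for k
  proof (rule int_by_bound)
    show "(\<lambda>t. 2 * cosh t) integrable_on {0..y}"
      by (intro integrable_continuous_interval continuous_intros)
    show "\<bar>\<bar>Gf k t\<bar>\<bar> \<le> 2 * cosh t" if "t \<in> {0..y}" for t
      using Gf_abs[of t k] G0_le_cosh[of t] that by auto
  qed auto
  have "(\<Sum>k\<in>F. \<bar>Ik k y\<bar>) \<le> (\<Sum>k\<in>F. integral {0..y} (\<lambda>t. \<bar>Gf k t\<bar>))"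
    unfolding Ik_def by (intro sum_mono) (use integral_norm_bound_integral[OF Gf_int ai] in simp)
  also have "\<dots> = integral {0..y} (\<lambda>t. \<Sum>k\<in>F. \<bar>Gf k t\<bar>)"
    by (rule integral_sum[symmetric]) (use F ai in auto)
  also have "\<dots> \<le> integral {0..y} (\<lambda>t. 2 * G0 t)"
    by (rule integral_le) (use F ai G0_int Gf_abs_sum in \<open>auto intro!: integrable_sum\<close>)
  also have "\<dots> = 2 * Ik 0 y" by (simp add: Ik_def Gf0[abs_def])
  finally show ?thesis .
qed

lemma integral_le_except0:
  fixes f g :: "real \<Rightarrow> real"
  assumes "f integrable_on {0..y}" "g integrable_on {0..y}" "\<And>t. 0 < t \<Longrightarrow> t \<le> y \<Longrightarrow> f t \<le> g t"
  shows "integral {0..y} f \<le> integral {0..y} g"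
proof -
  have neg: "negligible {x \<in> {0..y} - {0<..y}. h x \<noteq> 0}" "negligible {x \<in> {0<..y} - {0..y}. h x \<noteq> 0}" for h :: "real \<Rightarrow> real"
    by (auto intro: negligible_subset[of "{0}"])
  have "integral {0..y} f = integral {0<..y} f" by (rule integral_spike_set[OF neg])
  also have "\<dots> \<le> integral {0<..y} g"
    using assms by (intro integral_le integrable_spike_set[OF _ neg]) auto
  also have "\<dots> = integral {0..y} g" by (rule integral_spike_set[OF neg, symmetric])
  finally show ?thesis .
qed

lemma has_integral_sq3: "(y::real) \<ge> 0 \<Longrightarrow> ((\<lambda>t. t\<^sup>2 / 3) has_integral (y ^ 3 / 9)) {0..y}"
proof -
  assume y: "y \<ge> 0"
  have "((\<lambda>t. t\<^sup>2 / 3) has_integral (y ^ 3 / 9 - 0 ^ 3 / 9)) {0..y}"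
    by (rule fundamental_theorem_of_calculus[OF y])
       (auto intro!: derivative_eq_intros simp: has_real_derivative_iff_has_vector_derivative[symmetric] power2_eq_square
             intro: has_vector_derivative_at_within)
  then show ?thesis by simp
qed

lemma J_lower: "y \<ge> 0 \<Longrightarrow> Ik 0 y \<ge> y ^ 3 / 9"
proof -
  assume y: "y \<ge> 0"
  have "y ^ 3 / 9 = integral {0..y} (\<lambda>t. t\<^sup>2 / 3)" using integral_unique[OF has_integral_sq3[OF y], symmetric] .
  also have "\<dots> \<le> integral {0..y} G0"
    by (rule integral_le_except0) (use G0_int G0_lower has_integral_sq3[OF y] in auto)
  finally show ?thesis by (simp add: Ik_def Gf0[abs_def])
qed

lemma J_upper: "y \<ge> 0 \<Longrightarrow> Ik 0 y \<le> y\<^sup>2 * sinh y"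
proof -
  assume y: "y \<ge> 0"
  have "integral {0..y} G0 \<le> integral {0..y} (\<lambda>t. y * sinh y)"
  proof (rule integral_le_except0)
    show "G0 t \<le> y * sinh y" if "0 < t" "t \<le> y" for t
    proof -
      have "G0 t \<le> t * sinh t" using G0_upper that by simp
      also have "\<dots> \<le> y * sinh y" using that by (intro mult_mono) auto
      finally show ?thesis .
    qed
  qed (use G0_int in auto)
  then show ?thesis using y by (simp add: Ik_def Gf0[abs_def] power2_eq_square mult.commute mult.left_commute)
qed

lemma J_nonneg: "y \<ge> 0 \<Longrightarrow> Ik 0 y \<ge> 0"
  using J_lower[of y] by (smt (verit) zero_le_power divide_nonneg_pos)

lemma Ik_neg_upper:
  assumes y: "y \<ge> 0" and k: "k \<noteq> 0"
  shows "Ik k y \<le> - (y ^ 3 / 9) / Q y k"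
proof -
  have Qy: "Q y k > 0" using k by (simp add: Q_pos')
  have "integral {0..y} (\<lambda>t. t\<^sup>2 / 3 / Q y k) \<le> integral {0..y} (\<lambda>t. - Gf k t)"
  proof (rule integral_le_except0)
    show "(\<lambda>t. - Gf k t) integrable_on {0..y}" using Gf_int by (rule integrable_neg)
    show "(\<lambda>t. t\<^sup>2 / 3 / Q y k) integrable_on {0..y}"
      by (intro integrable_continuous_interval continuous_intros) (use Qy in auto)
    show "t\<^sup>2 / 3 / Q y k \<le> - Gf k t" if "0 < t" "t \<le> y" for t
    proof -
      have Qt: "Q t k > 0" using k by (simp add: Q_pos')
      have Qle: "Q t k \<le> Q y k" using that by (simp add: Q_def power_mono)
      have "t\<^sup>2 / 3 / Q y k \<le> t\<^sup>2 / Q y k" using Qy by (intro divide_right_mono) auto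
      also have "\<dots> \<le> t\<^sup>2 / Q t k" using Qt Qle by (intro divide_left_mono) auto
      also have "\<dots> \<le> t * sinh t / Q t k"
        using sinh_ge[of t] that Qt by (intro divide_right_mono) (auto simp: power2_eq_square)
      finally show ?thesis using k by (simp add: Gf_def)
    qed
  qed
  moreover have "integral {0..y} (\<lambda>t. t\<^sup>2 / 3 / Q y k) = (y ^ 3 / 9) / Q y k"
    using integral_unique[OF has_integral_divide[OF has_integral_sq3[OF y]]] .
  ultimately show ?thesis by (simp add: Ik_def)
qed

lemma sinh_lower:
  fixes y :: real
  assumes y: "y \<ge> 0"
  shows "sinh y \<ge> y * exp (y / 2) / 2"
proof -
  have "sinh y = 2 * sinh (y / 2) * cosh (y / 2)" using sinh_double[of "y / 2"] by simp
  moreover have "sinh (y / 2) \<ge> y / 2" using sinh_ge[of "y / 2"] y by simp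
  moreover have "cosh (y / 2) \<ge> exp (y / 2) / 2"
    by (simp add: cosh_field_def divide_right_mono)
  moreover have "(y / 2) * (exp (y / 2) / 2) \<le> sinh (y / 2) * cosh (y / 2)"
    using calculation(2,3) y by (intro mult_mono) auto
  ultimately show ?thesis by simp
qed

lemma maj:
  fixes y :: real
  assumes y: "y > 0"
  shows "4 * y ^ 3 / (sinh y)\<^sup>2 \<le> 32 * exp (- (1 / 2) * y)"
proof -
  have sl: "sinh y \<ge> y * exp (y / 2) / 2" using sinh_lower y by simp
  have p: "y * exp (y / 2) / 2 > 0" using y by simp
  have sq: "(sinh y)\<^sup>2 \<ge> (y * exp (y / 2) / 2)\<^sup>2" using sl p by (intro power_mono) auto
  have e2: "(exp (y / 2))\<^sup>2 = exp y" by (simp add: power2_eq_square flip: exp_add)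
  have sq': "(sinh y)\<^sup>2 \<ge> y\<^sup>2 * exp y / 4" using sq e2 by (simp add: power_mult_distrib power_divide)
  have pos: "y\<^sup>2 * exp y / 4 > 0" using y by simp
  have "4 * y ^ 3 / (sinh y)\<^sup>2 \<le> 4 * y ^ 3 / (y\<^sup>2 * exp y / 4)"
    using sq' pos y by (intro divide_left_mono) auto
  also have "\<dots> = 16 * y * exp (- y)"
    using y by (simp add: field_simps power2_eq_square power3_eq_cube exp_minus)
  also have "\<dots> \<le> 16 * (2 * exp (y / 2)) * exp (- y)"
  proof -
    have "1 + y / 2 \<le> exp (y / 2)" by (rule exp_ge_add_one_self)
    then have "y \<le> 2 * exp (y / 2)" by linarith
    then show ?thesis by (intro mult_right_mono) auto
  qed
  also have "\<dots> = 32 * exp (- (1 / 2) * y)"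
    by (simp flip: exp_add)
  finally show ?thesis .
qed

definition W :: "real \<Rightarrow> real" where "W y = 2 * y / (sinh y) ^ 3"

lemma W_meas [measurable]: "W \<in> borel_measurable borel"
  unfolding W_def[abs_def] by measurable

lemma W_nonneg: "y \<ge> 0 \<Longrightarrow> W y \<ge> 0"
  by (simp add: W_def)

lemma hbound:
  assumes y: "y \<ge> 0"
  shows "2 * W y * Ik 0 y \<le> 32 * exp (- (1 / 2) * y)"
proof (cases "y = 0")
  case True then show ?thesis by (simp add: W_def)
next
  case False
  then have yp: "y > 0" using y by simp
  have "2 * W y * Ik 0 y \<le> 2 * W y * (y\<^sup>2 * sinh y)"
    using J_upper[OF y] W_nonneg[OF y] by (intro mult_left_mono) auto
  also have "\<dots> = 4 * y ^ 3 / (sinh y)\<^sup>2"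
    using yp by (simp add: W_def field_simps power2_eq_square power3_eq_cube)
  also have "\<dots> \<le> 32 * exp (- (1 / 2) * y)" by (rule maj[OF yp])
  finally show ?thesis .
qed

lemma exp_int: "(\<lambda>y::real. 32 * exp (- (1 / 2) * y)) integrable_on {0..}"
proof -
  have "(\<lambda>x::real. exp (- (1 / 2) * x)) integrable_on {0..}"
    using integrable_on_exp_minus_to_infinity[of "1/2" 0] by simp
  then show ?thesis by simp
qed

lemma h_int: "(\<lambda>y. 2 * W y * Ik 0 y) integrable_on {0..}"
proof (rule int_by_bound[OF _ exp_int])
  show "\<bar>2 * W y * Ik 0 y\<bar> \<le> 32 * exp (- (1 / 2) * y)" if "y \<in> {0..}" for y
    using hbound[of y] J_nonneg[of y] W_nonneg[of y] that by auto
qed auto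

lemma WIk_bound:
  assumes y: "y \<ge> 0"
  shows "\<bar>W y * Ik k y\<bar> \<le> 2 * W y * Ik 0 y"
proof -
  have "W y * \<bar>Ik k y\<bar> \<le> W y * (2 * Ik 0 y)"
    using Ik_sum_abs[of y "{k}"] W_nonneg[of y] y by (intro mult_left_mono) auto
  then show ?thesis using W_nonneg[OF y] by (simp add: abs_mult)
qed

lemma WIk_int: "(\<lambda>y. W y * Ik k y) integrable_on {0..}"
proof (rule int_by_bound[OF _ exp_int])
  show "\<bar>W y * Ik k y\<bar> \<le> 32 * exp (- (1 / 2) * y)" if "y \<in> {0..}" for y
    using hbound[of y] WIk_bound[of y k] that by auto
qed auto

lemma calE_eq: "calE k = integral {0..} (\<lambda>y. W y * Ik k y)"
proof (cases "k = 0")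
  case False
  have "Ik k y = - integral {0..y} (\<lambda>t. t * sinh t / (t\<^sup>2 + pi\<^sup>2 * (real_of_int k)\<^sup>2))" for y
    using False by (simp add: Ik_def Gf_def[abs_def] Q_def)
  then have "(\<lambda>y. W y * Ik k y) = (\<lambda>y. - (2 * y / (sinh y) ^ 3 *
         integral {0..y} (\<lambda>t. t * sinh t / (t\<^sup>2 + pi\<^sup>2 * (real_of_int k)\<^sup>2))))"
    by (auto simp: W_def)
  then show ?thesis using False by (simp add: calE_def)
next
  case True
  have eq: "2 * y / (sinh y) ^ 3 * (sinh y - integral {0..y} (\<lambda>t. sinh t / t)) = W y * Ik 0 y"
    if "y \<in> {0..}" for y
  proof -
    have y: "y \<ge> 0" using that by simp
    have ci: "cosh integrable_on {0..y}" by (intro integrable_continuous_interval continuous_intros)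
    have c: "integral {0..y} cosh = sinh y"
    proof -
      have "(cosh has_integral (sinh y - sinh 0)) {0..y}"
        by (rule fundamental_theorem_of_calculus[OF y])
           (auto intro!: derivative_eq_intros simp: has_real_derivative_iff_has_vector_derivative[symmetric]
                 intro: has_vector_derivative_at_within)
      then show ?thesis by (simp add: integral_unique)
    qed
    have si: "(\<lambda>t. sinh t / t) integrable_on {0..y}"
    proof -
      have "(\<lambda>t. cosh t - G0 t) integrable_on {0..y}" by (intro integrable_diff ci G0_int)
      then show ?thesis by (simp add: G0_def)
    qed
    have "Ik 0 y = integral {0..y} (\<lambda>t. cosh t - sinh t / t)" by (simp add: Ik_def Gf0[abs_def] G0_def)
    also have "\<dots> = sinh y - integral {0..y} (\<lambda>t. sinh t / t)"
      by (subst integral_diff[OF ci si]) (simp add: c)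
    finally show ?thesis by (simp add: W_def)
  qed
  have "calE k = integral {0..} (\<lambda>y. 2 * y / (sinh y) ^ 3 * (sinh y - integral {0..y} (\<lambda>t. sinh t / t)))"
    using True by (simp add: calE_def)
  also have "\<dots> = integral {0..} (\<lambda>y. W y * Ik 0 y)" by (rule integral_cong[OF eq])
  finally show ?thesis using True by simp
qed

lemma outer_sum_bound:
  assumes y: "y \<ge> 0" and F: "finite F"
  shows "(\<Sum>k\<in>F. \<bar>W y * Ik k y\<bar>) \<le> 2 * W y * Ik 0 y"
proof -
  have "(\<Sum>k\<in>F. \<bar>W y * Ik k y\<bar>) = W y * (\<Sum>k\<in>F. \<bar>Ik k y\<bar>)"
    using W_nonneg[OF y] by (simp add: abs_mult sum_distrib_left)
  also have "\<dots> \<le> W y * (2 * Ik 0 y)" using Ik_sum_abs[OF y F] W_nonneg[OF y] by (intro mult_left_mono) auto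
  finally show ?thesis by simp
qed

lemma calE_sum: "(calE has_sum 0) UNIV"
proof -
  have "((\<lambda>k. integral {0..} (\<lambda>y. W y * Ik k y)) has_sum integral {0..} (\<lambda>_::real. 0::real)) UNIV"
  proof (rule has_sum_integral[where h="\<lambda>y. 2 * W y * Ik 0 y" and N="{0}" and \<phi>="\<lambda>k y. W y * Ik k y" and \<Phi>="\<lambda>_. 0"])
    show "(\<Sum>k\<in>F. \<bar>W x * Ik k x\<bar>) \<le> 2 * W x * Ik 0 x" if "x \<in> {0..}" "finite F" for x F
      using outer_sum_bound that by auto
    show "((\<lambda>k. W x * Ik k x) has_sum 0) UNIV" if "x \<in> {0..} - {0}" for x
      using has_sum_cmult_right[OF Ik_sum0[of x], of "W x"] that by simp
  qed (auto simp: WIk_int h_int infinite_UNIV_int)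
  then show ?thesis by (simp add: calE_eq[abs_def])
qed

lemma calE_hilbert_pos:
  assumes n: "n > 0"
  shows "((\<lambda>k. calE k / (pi * real_of_int (n - k))) has_sum calF n) (UNIV - {n})"
proof -
  define \<Phi> where "\<Phi> y = W y / pi * (Ph n y / real_of_int n)" for y
  have "((\<lambda>k. integral {0..} (\<lambda>y. W y * Ik k y / (pi * real_of_int (n - k)))) has_sum integral {0..} \<Phi>) (UNIV - {n})"
  proof (rule has_sum_integral[where h="\<lambda>y. 2 * W y * Ik 0 y" and N="{0}"])
    show "(\<lambda>y. W y * Ik k y / (pi * real_of_int (n - k))) integrable_on {0..}" for k
      using WIk_int by (rule integrable_on_divide)
    show "(\<Sum>k\<in>F. \<bar>W x * Ik k x / (pi * real_of_int (n - k))\<bar>) \<le> 2 * W x * Ik 0 x"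
      if "x \<in> {0..}" "finite F" "F \<subseteq> UNIV - {n}" for x F
    proof -
      have "(\<Sum>k\<in>F. \<bar>W x * Ik k x / (pi * real_of_int (n - k))\<bar>) \<le> (\<Sum>k\<in>F. \<bar>W x * Ik k x\<bar>)"
      proof (rule sum_mono)
        fix k assume "k \<in> F"
        then have "k \<noteq> n" using that by auto
        then have "1 \<le> \<bar>real_of_int (n - k)\<bar>" by linarith
        moreover have "1 \<le> pi" using pi_gt3 by simp
        ultimately have "1 * 1 \<le> pi * \<bar>real_of_int (n - k)\<bar>"
          by (intro mult_mono) auto
        then have "1 \<le> \<bar>pi * real_of_int (n - k)\<bar>" by (simp add: abs_mult)
        then show "\<bar>W x * Ik k x / (pi * real_of_int (n - k))\<bar> \<le> \<bar>W x * Ik k x\<bar>"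
          by (simp add: abs_divide divide_le_eq mult_le_cancel_left1)
      qed
      also have "\<dots> \<le> 2 * W x * Ik 0 x" using outer_sum_bound that by auto
      finally show ?thesis .
    qed
    show "((\<lambda>k. W x * Ik k x / (pi * real_of_int (n - k))) has_sum \<Phi> x) (UNIV - {n})"
      if "x \<in> {0..} - {0}" for x
    proof -
      have "((\<lambda>k. W x / pi * (Ik k x / real_of_int (n - k))) has_sum \<Phi> x) (UNIV - {n})"
        unfolding \<Phi>_def by (rule has_sum_cmult_right[OF Ik_hilbert]) (use that n in auto)
      then show ?thesis by (simp add: field_simps)
    qed
  qed (auto simp: h_int infinite_UNIV_int)
  moreover have "integral {0..} (\<lambda>y. W y * Ik k y / (pi * real_of_int (n - k))) = calE k / (pi * real_of_int (n - k))" for k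
    by (simp only: integral_divide calE_eq)
  moreover have "integral {0..} \<Phi> = calF n"
  proof -
    have "\<Phi> y = 1 / (pi * real_of_int n) * (2 * y ^ 3 / ((y\<^sup>2 + pi\<^sup>2 * (real_of_int n)\<^sup>2) * (sinh y)\<^sup>2))"
      if "y \<in> {0..}" for y
    proof (cases "y = 0")
      case True then show ?thesis by (simp add: \<Phi>_def W_def)
    next
      case False
      then have s0: "sinh y \<noteq> 0" by simp
      have "W y * Ph n y = 2 * y ^ 3 / (Q y n * (sinh y)\<^sup>2)"
        using s0 Q_pos'[of n y] n unfolding W_def Ph_def by (simp add: power2_eq_square power3_eq_cube field_simps)
      moreover have "\<Phi> y = W y * Ph n y / (pi * real_of_int n)" by (simp add: \<Phi>_def)
      ultimately show ?thesis by (simp add: Q_def)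
    qed
    then have "integral {0..} \<Phi> = integral {0..} (\<lambda>y. 1 / (pi * real_of_int n) * (2 * y ^ 3 / ((y\<^sup>2 + pi\<^sup>2 * (real_of_int n)\<^sup>2) * (sinh y)\<^sup>2)))"
      by (rule integral_cong)
    also have "\<dots> = 1 / (pi * real_of_int n) * integral {0..} (\<lambda>y. 2 * y ^ 3 / ((y\<^sup>2 + pi\<^sup>2 * (real_of_int n)\<^sup>2) * (sinh y)\<^sup>2))"
      by (rule integral_mult_right)
    also have "\<dots> = calF n" using n unfolding calF_def by simp
    finally show ?thesis .
  qed
  ultimately show ?thesis by (simp only:)
qed

lemma W_lower12:
  assumes y: "y \<in> {1..2}"
  shows "W y \<ge> 2 / (sinh 2)^3"
proof -
  have sp: "sinh y > 0" using y by simp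
  have "(sinh y)^3 \<le> (sinh 2)^3" using y sp by (intro power_mono) auto
  then have "2 / (sinh 2)^3 \<le> 2 / (sinh y)^3" using sp by (intro divide_left_mono) auto
  also have "\<dots> \<le> 2 * y / (sinh y)^3" using y sp by (intro divide_right_mono) auto
  finally show ?thesis by (simp add: W_def)
qed

lemma pos_integral_lemma:
  fixes f :: "real \<Rightarrow> real"
  assumes int: "f integrable_on {0..}" and nn: "\<And>y. y \<ge> 0 \<Longrightarrow> f y \<ge> 0"
    and c: "c > 0" and lb: "\<And>y. y \<in> {1..2} \<Longrightarrow> f y \<ge> c"
  shows "integral {0..} f > 0"
proof -
  have i12: "f integrable_on {1..2}" by (rule integrable_on_subinterval[OF int]) auto
  have "c = integral {1..2::real} (\<lambda>_. c)" by simp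
  also have "\<dots> \<le> integral {1..2} f" by (rule integral_le) (use i12 lb in auto)
  also have "\<dots> \<le> integral {0..} f" by (rule integral_subset_le) (use i12 int nn in auto)
  finally show ?thesis using c by simp
qed

lemma calE0_pos: "calE 0 > 0"
proof -
  have "integral {0..} (\<lambda>y. W y * Ik 0 y) > 0"
  proof (rule pos_integral_lemma[OF WIk_int, where c="2 / (sinh 2)^3 * (1 / 9)"])
    show "0 \<le> W y * Ik 0 y" if "y \<ge> 0" for y using W_nonneg J_nonneg that by simp
    show "2 / (sinh 2)^3 * (1 / 9) \<le> W y * Ik 0 y" if "y \<in> {1..2}" for y
    proof (rule mult_mono)
      show "2 / (sinh 2)^3 \<le> W y" by (rule W_lower12[OF that])
      have "1 ^ 3 / 9 \<le> y ^ 3 / 9" using that by (intro divide_right_mono power_mono) auto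
      also have "\<dots> \<le> Ik 0 y" using J_lower that by auto
      finally show "1 / 9 \<le> Ik 0 y" by simp
    qed (use that W_nonneg in auto)
  qed simp
  then show ?thesis by (simp add: calE_eq)
qed

lemma calE_neg:
  assumes k: "k \<noteq> 0"
  shows "calE k < 0"
proof -
  have Q2: "Q 2 k > 0" using k by (simp add: Q_pos')
  have "integral {0..} (\<lambda>y. - (W y * Ik k y)) > 0"
  proof (rule pos_integral_lemma[where c="2 / (sinh 2)^3 * ((1 / 9) / Q 2 k)"])
    show "(\<lambda>y. - (W y * Ik k y)) integrable_on {0..}" using WIk_int by (rule integrable_neg)
    show "0 \<le> - (W y * Ik k y)" if "y \<ge> 0" for y
    proof -
      have "Ik k y \<le> - (y ^ 3 / 9) / Q y k" by (rule Ik_neg_upper[OF that k])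
      also have "\<dots> \<le> 0" using Q_pos'[OF k, of y] that by (simp add: divide_nonneg_pos)
      finally show ?thesis using W_nonneg[OF that] by (simp add: mult_nonneg_nonpos)
    qed
    show "2 / (sinh 2)^3 * ((1 / 9) / Q 2 k) \<le> - (W y * Ik k y)" if "y \<in> {1..2}" for y
    proof -
      have Qy: "Q y k > 0" using k by (simp add: Q_pos')
      have Qle: "Q y k \<le> Q 2 k" using that power_mono[of y 2 2] by (simp add: Q_def)
      have "(1 / 9) / Q 2 k \<le> (1 / 9) / Q y k" using Qy Qle by (intro divide_left_mono) auto
      also have "\<dots> \<le> (y ^ 3 / 9) / Q y k"
      proof -
        have "1 ^ 3 / 9 \<le> y ^ 3 / 9" using that by (intro divide_right_mono power_mono) auto
        then show ?thesis using Qy by (intro divide_right_mono) auto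
      qed
      also have "\<dots> \<le> - Ik k y" using Ik_neg_upper[of y k] that k by auto
      finally have b: "(1 / 9) / Q 2 k \<le> - Ik k y" .
      have "2 / (sinh 2)^3 * ((1 / 9) / Q 2 k) \<le> W y * (- Ik k y)"
        by (rule mult_mono[OF W_lower12[OF that] b]) (use that W_nonneg Q2 in auto)
      then show ?thesis by simp
    qed
  qed (use Q2 in simp)
  then show ?thesis by (simp add: calE_eq)
qed

lemma calE_even: "calE (- k) = calE k"
  by (simp add: calE_def)

lemma calF_odd: "calF (- k) = - calF k"
  by (simp add: calF_def)

theorem lemma3p15:
  shows "(\<forall>n::int. ((\<lambda>m::int. calE (n - m) / (pi * real_of_int m)) has_sum (calF n)) (UNIV - {0}))
    \<and> 0 < calE 0
    \<and> (\<forall>n::int. n \<noteq> 0 \<longrightarrow> calE n < 0)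
    \<and> ((\<lambda>n. \<bar>calE n\<bar>) summable_on UNIV)
    \<and> (calE has_sum 0) UNIV"
proof (intro conjI allI impI)
  have pos: "((\<lambda>m. calE (n - m) / (pi * real_of_int m)) has_sum calF n) (UNIV - {0})" if n: "n > 0" for n
  proof -
    have "((\<lambda>k. calE k / (pi * real_of_int (n - k))) has_sum calF n) (UNIV - {n}) =
          ((\<lambda>m. calE (n - m) / (pi * real_of_int m)) has_sum calF n) (UNIV - {0})"
      by (rule has_sum_reindex_bij_witness[where j="\<lambda>k. n - k" and i="\<lambda>m. n - m"]) auto
    then show ?thesis using calE_hilbert_pos[OF n] by simp
  qed
  have asum: "(\<lambda>n. \<bar>calE n\<bar>) summable_on UNIV"
    using calE_sum summable_on_iff_abs_summable_on_real[of calE UNIV] has_sum_imp_summable by fastforce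
  show "(\<lambda>n. \<bar>calE n\<bar>) summable_on UNIV" by (rule asum)
  show "(calE has_sum 0) UNIV" by (rule calE_sum)
  show "0 < calE 0" by (rule calE0_pos)
  show "calE n < 0" if "n \<noteq> 0" for n using calE_neg that by blast
  show "((\<lambda>m. calE (n - m) / (pi * real_of_int m)) has_sum calF n) (UNIV - {0})" for n
  proof (cases "n > 0")
    case True then show ?thesis by (rule pos)
  next
    case False
    show ?thesis
    proof (cases "n = 0")
      case True
      have s: "(\<lambda>m. calE (n - m) / (pi * real_of_int m)) summable_on (UNIV - {0})"
      proof (rule summable_cmp)
        have "(\<lambda>m. \<bar>calE m\<bar>) summable_on UNIV" by (rule asum)
        then have "(\<lambda>m. \<bar>calE (- m)\<bar>) summable_on UNIV" by (simp add: calE_even)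
        then show "(\<lambda>m. \<bar>calE (n - m)\<bar>) summable_on (UNIV - {0})"
          using True summable_on_subset by fastforce
        show "\<bar>calE (n - m) / (pi * real_of_int m)\<bar> \<le> \<bar>calE (n - m)\<bar>" if "m \<in> UNIV - {0}" for m
        proof -
          have "1 \<le> \<bar>real_of_int m\<bar>" using that by auto
          moreover have "1 \<le> pi" using pi_gt3 by simp
          ultimately have "1 * 1 \<le> pi * \<bar>real_of_int m\<bar>" by (intro mult_mono) auto
          then have "1 \<le> \<bar>pi * real_of_int m\<bar>" by (simp add: abs_mult)
          then show ?thesis by (simp add: abs_divide divide_le_eq mult_le_cancel_left1)
        qed
      qed
      then obtain S where S: "((\<lambda>m. calE (n - m) / (pi * real_of_int m)) has_sum S) (UNIV - {0})"
        by (auto simp: summable_on_def)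
      have "S = 0" by (rule has_sum_odd_zero[OF S]) (auto simp: True calE_even)
      then show ?thesis using S True by (simp add: calF_def)
    next
      case False2: False
      then have np: "- n > 0" using False by simp
      have h: "((\<lambda>m. calE (- n - m) / (pi * real_of_int m)) has_sum calF (- n)) (UNIV - {0})"
        by (rule pos[OF np])
      have "((\<lambda>m. calE (- n - m) / (pi * real_of_int m)) has_sum calF (- n)) (UNIV - {0}) =
            ((\<lambda>m. - (calE (n - m) / (pi * real_of_int m))) has_sum calF (- n)) (UNIV - {0})"
      proof (rule has_sum_reindex_bij_witness[where j="\<lambda>m. - m" and i="\<lambda>m. - m"])
        show "- (calE (n - - a) / (pi * real_of_int (- a))) = calE (- n - a) / (pi * real_of_int a)" for a
        proof -
          have e: "- n - a = - (n + a)" by simp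
          have e1: "calE (- n - a) = calE (n + a)" unfolding e by (rule calE_even)
          show ?thesis by (simp add: e1)
        qed
      qed auto
      then have "((\<lambda>m. - (calE (n - m) / (pi * real_of_int m))) has_sum calF (- n)) (UNIV - {0})" using h by simp
      then have "((\<lambda>m. calE (n - m) / (pi * real_of_int m)) has_sum - calF (- n)) (UNIV - {0})"
        using has_sum_uminus by blast
      then show ?thesis by (simp add: calF_odd)
    qed
  qed
qed

end
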